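(* Let $I$ be a real interval with $[0,1]\subseteq I\subseteq\mathbb{R}_+$, and let $f\colon I^n\to\mathbb{R}$ be a nonconstant quasi-Lovász extension, $f=L\circ\varphi$. Then the following are equivalent: (i) $f_0$ is weakly homogeneous; (ii) there exists $A\subseteq[n]$ with $f_0(\mathbf{1}_A)\neq0$; (iii) $\varphi(1)\neq 0$. Moreover, in this case $f_0(x\mathbf{1}_A)=\frac{\varphi(x)}{\varphi(1)}f_0(\mathbf{1}_A)$ for all $x\in I$ and all $A\subseteq[n]$.
   Context: Notation: $[n]=\{1,\ldots,n\}$; $\mathbf{1}_A$ is the indicator tuple of $A\subseteq[n]$, $\mathbf{0}=\mathbf{1}_\varnothing$; for a function $g$, $g_0=g-g(\mathbf{0})$. For $\sigma$ a permutation of $[n]$, $\mathbb{R}^n_\sigma=\{\mathbf{x}: x_{\sigma(1)}\leq\cdots\leq x_{\sigma(n)}\}$, $A^\uparrow_\sigma(i)=\{\sigma(i),\ldots,\sigma(n)\}$, $A^\uparrow_\sigma(n+1)=\varnothing$. The Lovász extension $L_\psi\colon\mathbb{R}^n\to\mathbb{R}$ of $\psi\colon\{0,1\}^n\to\mathbb{R}$ is the function whose restriction to each $\mathbb{R}^n_\sigma$ is the unique affine function agreeing with $\psi$ at the points $\mathbf{1}_{A^\uparrow_\sigma(k)}$, $k\in[n+1]$; a Lovász extension is any such $L_\psi$. A quasi-Lovász extension is a function $f\colon I^n\to\mathbb{R}$ with $f(\mathbf{x})=L(\varphi(x_1),\ldots,\varphi(x_n))$, where $L$ is a Lovász extension and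 $\varphi\colon I\to\mathbb{R}$ is nondecreasing with $\varphi(0)=0$. A function $g\colon I^n\to\mathbb{R}$ with $I\subseteq\mathbb{R}_+$ is weakly homogeneous if there exists a nondecreasing $\phi\colon I\to\mathbb{R}$ with $\phi(0)=0$ such that $g(x\mathbf{1}_A)=\phi(x)g(\mathbf{1}_A)$ for all $x\in I$, $A\subseteq[n]$. *)

theory Defs
  imports "HOL-Analysis.Analysis"
begin

text \<open>Vectors in R^n are represented as functions nat => real; only the
coordinates 1..n are relevant. Subsets of [n] represent points of {0,1}^n.\<close>

definition ind :: "nat set \<Rightarrow> (nat \<Rightarrow> real)" where
  "ind A = (\<lambda>i. if i \<in> A then 1 else 0)"

definition up_set :: "(nat \<Rightarrow> nat) \<Rightarrow> nat \<Rightarrow> nat \<Rightarrow> nat set" where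
  "up_set \<sigma> n i = \<sigma> ` {i..n}"

definition sorted_region :: "nat \<Rightarrow> (nat \<Rightarrow> nat) \<Rightarrow> (nat \<Rightarrow> real) set" where
  "sorted_region n \<sigma> = {x. \<forall>i j. 1 \<le> i \<and> i \<le> j \<and> j \<le> n \<longrightarrow> x (\<sigma> i) \<le> x (\<sigma> j)}"

definition is_Lovasz_ext_of :: "nat \<Rightarrow> (nat set \<Rightarrow> real) \<Rightarrow> ((nat \<Rightarrow> real) \<Rightarrow> real) \<Rightarrow> bool" where
  "is_Lovasz_ext_of n \<psi> L \<longleftrightarrow>
     (\<forall>\<sigma>. bij_betw \<sigma> {1..n} {1..n} \<longrightarrow>
        (\<exists>c (a :: nat \<Rightarrow> real).
           (\<forall>k \<in> {1..n+1}. c + (\<Sum>i=1..n. a i * ind (up_set \<sigma> n k) i) = \<psi> (up_set \<sigma> n k)) \<and>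
           (\<forall>x \<in> sorted_region n \<sigma>. L x = c + (\<Sum>i=1..n. a i * x i))))"

definition is_Lovasz_ext :: "nat \<Rightarrow> ((nat \<Rightarrow> real) \<Rightarrow> real) \<Rightarrow> bool" where
  "is_Lovasz_ext n L \<longleftrightarrow> (\<exists>\<psi>. is_Lovasz_ext_of n \<psi> L)"

definition cube :: "real set \<Rightarrow> nat \<Rightarrow> (nat \<Rightarrow> real) set" where
  "cube I n = {x. \<forall>i \<in> {1..n}. x i \<in> I}"

definition is_quasi_Lovasz_ext_via ::
  "real set \<Rightarrow> nat \<Rightarrow> ((nat \<Rightarrow> real) \<Rightarrow> real) \<Rightarrow> (real \<Rightarrow> real) \<Rightarrow> ((nat \<Rightarrow> real) \<Rightarrow> real) \<Rightarrow> bool" where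
  "is_quasi_Lovasz_ext_via I n L \<phi> f \<longleftrightarrow>
     is_Lovasz_ext n L \<and> mono_on I \<phi> \<and> \<phi> 0 = 0 \<and>
     (\<forall>x \<in> cube I n. f x = L (\<lambda>i. \<phi> (x i)))"

definition weakly_homogeneous :: "real set \<Rightarrow> nat \<Rightarrow> ((nat \<Rightarrow> real) \<Rightarrow> real) \<Rightarrow> bool" where
  "weakly_homogeneous I n g \<longleftrightarrow>
     (\<exists>\<phi>. mono_on I \<phi> \<and> \<phi> 0 = 0 \<and>
        (\<forall>x \<in> I. \<forall>A. A \<subseteq> {1..n} \<longrightarrow> g (\<lambda>i. x * ind A i) = \<phi> x * g (ind A)))"

end

theory Submission
  imports Defs
begin

lemma exists_sorting:
  fixes z :: "nat \<Rightarrow> real"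
  shows "\<exists>\<sigma>. bij_betw \<sigma> {1..n} {1..n} \<and> z \<in> sorted_region n \<sigma>"
proof -
  define xs where "xs = sort_key z [1..<Suc n]"
  define \<sigma> where "\<sigma> = (\<lambda>i. if 1 \<le> i \<and> i \<le> n then xs ! (i - 1) else i)"
  have len: "length xs = n" and dist: "distinct xs" and st: "set xs = {1..n}"
    and so: "sorted (map z xs)" by (auto simp: xs_def)
  have img: "\<sigma> ` {1..n} = {1..n}"
  proof -
    have "\<sigma> ` {1..n} = (\<lambda>i. xs ! (i - 1)) ` {1..n}" by (auto simp: \<sigma>_def)
    also have "\<dots> = (\<lambda>i. xs ! i) ` {0..<n}"
    proof (rule set_eqI, rule iffI)
      fix y assume "y \<in> (\<lambda>i. xs ! (i - 1)) ` {1..n}"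
      then obtain i where "i \<in> {1..n}" "y = xs ! (i - 1)" by auto
      then show "y \<in> (\<lambda>i. xs ! i) ` {0..<n}" by (intro image_eqI[of _ _ "i - 1"]) auto
    next
      fix y assume "y \<in> (\<lambda>i. xs ! i) ` {0..<n}"
      then obtain i where "i < n" "y = xs ! i" by auto
      then show "y \<in> (\<lambda>i. xs ! (i - 1)) ` {1..n}" by (intro image_eqI[of _ _ "i + 1"]) auto
    qed
    also have "\<dots> = set xs" using len by (auto simp: in_set_conv_nth)
    finally show ?thesis using st by simp
  qed
  have inj: "inj_on \<sigma> {1..n}"
  proof (rule inj_onI)
    fix i j assume "i \<in> {1..n}" "j \<in> {1..n}" "\<sigma> i = \<sigma> j"
    then have "xs ! (i - 1) = xs ! (j - 1)" by (auto simp: \<sigma>_def)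
    then have "i - 1 = j - 1" using dist len \<open>i \<in> {1..n}\<close> \<open>j \<in> {1..n}\<close>
      using nth_eq_iff_index_eq[OF dist, of "i - 1" "j - 1"] by auto
    then show "i = j" using \<open>i \<in> {1..n}\<close> \<open>j \<in> {1..n}\<close> by auto
  qed
  have "z \<in> sorted_region n \<sigma>"
    unfolding sorted_region_def
  proof (intro CollectI allI impI)
    fix i j assume h: "1 \<le> i \<and> i \<le> j \<and> j \<le> n"
    have "map z xs ! (i - 1) \<le> map z xs ! (j - 1)"
      using so h len unfolding sorted_iff_nth_mono by auto
    then show "z (\<sigma> i) \<le> z (\<sigma> j)" using h len by (auto simp: \<sigma>_def)
  qed
  then show ?thesis using img inj by (auto simp: bij_betw_def)
qed

lemma region_affine:
  assumes "is_Lovasz_ext n L" "bij_betw \<sigma> {1..n} {1..n}"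
  shows "\<exists>c a. \<forall>x\<in>sorted_region n \<sigma>. L x = c + (\<Sum>i=1..n. a i * x i)"
  using assms unfolding is_Lovasz_ext_def is_Lovasz_ext_of_def by blast

lemma zero_region: "(\<lambda>i. 0) \<in> sorted_region n \<sigma>"
  by (simp add: sorted_region_def)

lemma hom:
  assumes "is_Lovasz_ext n L" "(t::real) \<ge> 0"
  shows "L (\<lambda>i. t * ind A i) = L (\<lambda>i. 0) + t * (L (ind A) - L (\<lambda>i. 0))"
proof -
  obtain \<sigma> where bij: "bij_betw \<sigma> {1..n} {1..n}" and r: "ind A \<in> sorted_region n \<sigma>"
    using exists_sorting by blast
  obtain c a where ca: "\<forall>x\<in>sorted_region n \<sigma>. L x = c + (\<Sum>i=1..n. a i * x i)"
    using region_affine[OF assms(1) bij] by blast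
  have r2: "(\<lambda>i. t * ind A i) \<in> sorted_region n \<sigma>"
    using r assms(2) by (auto simp: sorted_region_def intro: mult_left_mono)
  have "L (\<lambda>i. t * ind A i) = c + t * (\<Sum>i=1..n. a i * ind A i)"
    using ca r2 by (simp add: sum_distrib_left algebra_simps)
  moreover have "L (\<lambda>i. 0) = c" using ca zero_region by simp
  moreover have "L (ind A) = c + (\<Sum>i=1..n. a i * ind A i)" using ca r by simp
  ultimately show ?thesis by simp
qed

lemma zero_coords:
  assumes "is_Lovasz_ext n L" "\<forall>i\<in>{1..n}. z i = 0"
  shows "L z = L (\<lambda>i. 0)"
proof -
  have bij: "bij_betw id {1..n} {1..n}" by simp
  obtain c a where ca: "\<forall>x\<in>sorted_region n id. L x = c + (\<Sum>i=1..n. a i * x i)"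
    using region_affine[OF assms(1) bij] by blast
  have "z \<in> sorted_region n id" using assms(2) by (auto simp: sorted_region_def)
  then show ?thesis using ca zero_region assms(2) by simp
qed

lemma const:
  assumes "is_Lovasz_ext n L" "\<forall>A. A \<subseteq> {1..n} \<longrightarrow> L (ind A) = L (\<lambda>i. 0)"
  shows "L z = L (\<lambda>i. 0)"
proof -
  obtain \<sigma> where bij: "bij_betw \<sigma> {1..n} {1..n}" and r: "z \<in> sorted_region n \<sigma>"
    using exists_sorting by blast
  obtain c a where ca: "\<forall>x\<in>sorted_region n \<sigma>. L x = c + (\<Sum>i=1..n. a i * x i)"
    using region_affine[OF assms(1) bij] by blast
  have L0: "L (\<lambda>i. 0) = c" using ca zero_region by simp
  have inj: "inj_on \<sigma> {1..n}" using bij by (simp add: bij_betw_def)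
  have img: "\<sigma> ` {1..n} = {1..n}" using bij by (simp add: bij_betw_def)
  have reidx: "\<And>g. (\<Sum>i=1..n. g i) = (\<Sum>j=1..n. g (\<sigma> j))"
    using sum.reindex[OF inj] img by (metis comp_apply sum.cong)
  define S where "S k = (\<Sum>j=k..n. a (\<sigma> j))" for k
  have S0: "S k = 0" if k: "k \<in> {1..n+1}" for k
  proof -
    define U where "U = \<sigma> ` {k..n}"
    have memU: "\<sigma> j \<in> U \<longleftrightarrow> k \<le> j" if "j \<in> {1..n}" for j
    proof
      assume "\<sigma> j \<in> U"
      then obtain j' where "j' \<in> {k..n}" "\<sigma> j = \<sigma> j'" by (auto simp: U_def)
      moreover have "j' \<in> {1..n}" using \<open>j' \<in> {k..n}\<close> k by auto
      ultimately have "j = j'" using inj that by (auto dest: inj_onD)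
      then show "k \<le> j" using \<open>j' \<in> {k..n}\<close> by simp
    qed (use that in \<open>auto simp: U_def\<close>)
    have Usub: "U \<subseteq> {1..n}" using img k by (auto simp: U_def)
    have "ind U \<in> sorted_region n \<sigma>"
      unfolding sorted_region_def
    proof (intro CollectI allI impI)
      fix i j assume h: "1 \<le> i \<and> i \<le> j \<and> j \<le> n"
      then show "ind U (\<sigma> i) \<le> ind U (\<sigma> j)"
        using memU[of i] memU[of j] by (auto simp: ind_def)
    qed
    then have "c + (\<Sum>i=1..n. a i * ind U i) = c"
      using ca assms(2) Usub L0 by force
    then have "0 = (\<Sum>j=1..n. a (\<sigma> j) * ind U (\<sigma> j))"
      using reidx[of "\<lambda>i. a i * ind U i"] by simp
    also have "\<dots> = (\<Sum>j=1..n. if k \<le> j then a (\<sigma> j) else 0)"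
      by (rule sum.cong) (auto simp: ind_def memU)
    also have "\<dots> = (\<Sum>j\<in>{1..n} \<inter> {j. k \<le> j}. a (\<sigma> j))"
      by (simp add: sum.inter_restrict)
    also have "{1..n} \<inter> {j. k \<le> j} = {k..n}" using k by auto
    finally show ?thesis by (simp add: S_def)
  qed
  have az: "a (\<sigma> k) = 0" if "k \<in> {1..n}" for k
  proof -
    have "S k = a (\<sigma> k) + S (Suc k)" using that unfolding S_def
      by (simp add: sum.atLeast_Suc_atMost)
    then show ?thesis using S0[of k] S0[of "Suc k"] that by simp
  qed
  have "L z = c + (\<Sum>j=1..n. a (\<sigma> j) * z (\<sigma> j))" using ca r reidx[of "\<lambda>i. a i * z i"] by simp
  also have "\<dots> = c" using az by simp
  finally show ?thesis using L0 by simp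
qed

theorem proposition3:
  fixes I :: "real set" and n :: nat
    and f L :: "(nat \<Rightarrow> real) \<Rightarrow> real" and \<phi> :: "real \<Rightarrow> real"
  assumes "is_interval I" and "{0..1} \<subseteq> I" and "I \<subseteq> {0..}"
    and "is_quasi_Lovasz_ext_via I n L \<phi> f"
    and "\<exists>x \<in> cube I n. \<exists>y \<in> cube I n. f x \<noteq> f y"
  defines "f0 \<equiv> (\<lambda>x. f x - f (ind {}))"
  shows "(weakly_homogeneous I n f0 \<longleftrightarrow> (\<exists>A. A \<subseteq> {1..n} \<and> f0 (ind A) \<noteq> 0))
       \<and> ((\<exists>A. A \<subseteq> {1..n} \<and> f0 (ind A) \<noteq> 0) \<longleftrightarrow> \<phi> 1 \<noteq> 0)
       \<and> (\<phi> 1 \<noteq> 0 \<longrightarrow>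
            (\<forall>x \<in> I. \<forall>A. A \<subseteq> {1..n} \<longrightarrow> f0 (\<lambda>i. x * ind A i) = \<phi> x / \<phi> 1 * f0 (ind A)))"
proof -
  have LE: "is_Lovasz_ext n L" and mono: "mono_on I \<phi>" and p0: "\<phi> 0 = 0"
    and fe: "\<forall>x \<in> cube I n. f x = L (\<lambda>i. \<phi> (x i))"
    using assms(4) unfolding is_quasi_Lovasz_ext_via_def by auto
  have I0: "0 \<in> I" and I1: "1 \<in> I" using assms(2) by auto
  have pnn: "\<phi> x \<ge> 0" if "x \<in> I" for x
    using monotone_onD[OF mono I0 that] that assms(3) p0 by auto
  define L0 where "L0 = L (\<lambda>i. 0)"
  define D where "D A = L (ind A) - L0" for A
  have cubeI: "(\<lambda>i. x * ind A i) \<in> cube I n" if "x \<in> I" for x A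
    using that I0 by (auto simp: cube_def ind_def)
  have ind0: "ind {} = (\<lambda>i. x * ind {} i)" for x by (simp add: ind_def)
  have fempty: "f (ind {}) = L0"
  proof -
    have "f (ind {}) = f (\<lambda>i. 0 * ind {} i)" using ind0 by metis
    also have "\<dots> = L (\<lambda>i. \<phi> (0 * ind {} i))" using fe cubeI[OF I0] by blast
    finally show ?thesis by (simp add: p0 L0_def)
  qed
  have key: "f0 (\<lambda>i. x * ind A i) = \<phi> x * D A" if "x \<in> I" for x A
  proof -
    have "f (\<lambda>i. x * ind A i) = L (\<lambda>i. \<phi> (x * ind A i))" using fe cubeI[OF that] by blast
    also have "(\<lambda>i. \<phi> (x * ind A i)) = (\<lambda>i. \<phi> x * ind A i)"
      by (auto simp: ind_def p0)
    also have "L \<dots> = L0 + \<phi> x * D A" using hom[OF LE pnn[OF that]] by (simp add: L0_def D_def)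
    finally show ?thesis using fempty by (simp add: f0_def)
  qed
  have key1: "f0 (ind A) = \<phi> 1 * D A" for A
    using key[OF I1, of A] by simp
  have exD: "\<exists>A. A \<subseteq> {1..n} \<and> D A \<noteq> 0"
  proof (rule ccontr)
    assume "\<not> ?thesis"
    then have "\<forall>A. A \<subseteq> {1..n} \<longrightarrow> L (ind A) = L (\<lambda>i. 0)" by (auto simp: D_def L0_def)
    then have Lc: "\<forall>z. L z = L0" using const[OF LE] L0_def by blast
    obtain x y where "x \<in> cube I n" "y \<in> cube I n" "f x \<noteq> f y" using assms(5) by blast
    then show False using fe Lc by metis
  qed
  then obtain A0 where A0: "A0 \<subseteq> {1..n}" "D A0 \<noteq> 0" by blast
  have notzero: "\<exists>x\<in>I. \<phi> x \<noteq> 0"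
  proof (rule ccontr)
    assume nz: "\<not> (\<exists>x\<in>I. \<phi> x \<noteq> 0)"
    have fx: "f x = L0" if xc: "x \<in> cube I n" for x
    proof -
      have "\<phi> (x i) = 0" if "i \<in> {1..n}" for i
      proof -
        have "x i \<in> I" using xc that unfolding cube_def by blast
        then show ?thesis using nz by blast
      qed
      then have "L (\<lambda>i. \<phi> (x i)) = L (\<lambda>i. 0)" by (intro zero_coords[OF LE]) simp
      moreover have "f x = L (\<lambda>i. \<phi> (x i))" using fe xc by blast
      ultimately show ?thesis by (simp add: L0_def)
    qed
    obtain x y where "x \<in> cube I n" "y \<in> cube I n" "f x \<noteq> f y" using assms(5) by blast
    then show False using fx by simp
  qed
  have p1: "\<phi> 1 \<ge> 0" using pnn I1 .
  have iii_form: "\<phi> 1 \<noteq> 0 \<longrightarrow>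
            (\<forall>x \<in> I. \<forall>A. A \<subseteq> {1..n} \<longrightarrow> f0 (\<lambda>i. x * ind A i) = \<phi> x / \<phi> 1 * f0 (ind A))"
    using key key1 by auto
  have ii_iii: "(\<exists>A. A \<subseteq> {1..n} \<and> f0 (ind A) \<noteq> 0) \<longleftrightarrow> \<phi> 1 \<noteq> 0"
    using key1 A0 by auto
  have i_ii: "weakly_homogeneous I n f0 \<longleftrightarrow> (\<exists>A. A \<subseteq> {1..n} \<and> f0 (ind A) \<noteq> 0)"
  proof
    assume "weakly_homogeneous I n f0"
    then obtain \<psi> where wh: "\<forall>x \<in> I. \<forall>A. A \<subseteq> {1..n} \<longrightarrow> f0 (\<lambda>i. x * ind A i) = \<psi> x * f0 (ind A)"
      unfolding weakly_homogeneous_def by blast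
    show "\<exists>A. A \<subseteq> {1..n} \<and> f0 (ind A) \<noteq> 0"
    proof (rule ccontr)
      assume "\<not> ?thesis"
      then have "f0 (ind A0) = 0" using A0 by auto
      have "\<phi> x * D A0 = 0" if "x \<in> I" for x
        using wh that A0(1) key[OF that, of A0] \<open>f0 (ind A0) = 0\<close> by simp
      then show False using notzero A0(2) by auto
    qed
  next
    assume "\<exists>A. A \<subseteq> {1..n} \<and> f0 (ind A) \<noteq> 0"
    then have ne: "\<phi> 1 \<noteq> 0" using ii_iii by blast
    then have pos: "\<phi> 1 > 0" using p1 by simp
    show "weakly_homogeneous I n f0"
      unfolding weakly_homogeneous_def
    proof (intro exI[of _ "\<lambda>x. \<phi> x / \<phi> 1"] conjI)
      show "mono_on I (\<lambda>x. \<phi> x / \<phi> 1)"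
        by (rule monotone_onI) (use monotone_onD[OF mono] pos in \<open>auto intro: divide_right_mono\<close>)
      show "\<phi> 0 / \<phi> 1 = 0" using p0 by simp
      show "\<forall>x\<in>I. \<forall>A. A \<subseteq> {1..n} \<longrightarrow> f0 (\<lambda>i. x * ind A i) = \<phi> x / \<phi> 1 * f0 (ind A)"
        using iii_form ne by blast
    qed
  qed
  show ?thesis using i_ii ii_iii iii_form by blast
qed

end
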